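(* Let $a,b$ be positive integers and let $A=(a_1,\ldots,a_n)$ be a sequence of positive integers such that $a_i\in\{a,a+1\}$ for every odd $i$ and $a_i\in\{b,b+1\}$ for every even $i$. (i) If $A=(P,a,R)$ where the displayed entry $a$ sits at an odd position and $P,R$ each have length at least $2$, then $$1+\frac{1}{a+2c^{(1)}_{a,a+1;b}}\le\frac{\langle P,a+1,R\rangle}{\langle P,a,R\rangle}\le 1+\frac{1}{a+2c^{(2)}_{a,a+1;b}}.$$ (ii) If $A=(P_1,b,R_1)$ where the displayed entry $b$ sits at an even position and $P_1,R_1$ each have length at least $2$, then $$1+\frac{1}{b+2c^{(1)}_{a;b,b+1}}\le\frac{\langle P_1,b+1,R_1\rangle}{\langle P_1,b,R_1\rangle}\le 1+\frac{1}{b+2c^{(2)}_{a;b,b+1}}.$$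
   Context: The continuant $\langle a_1,\ldots,a_n\rangle$ is defined by $\langle\,\rangle=1$, $\langle a_1\rangle=a_1$, $\langle a_1,\ldots,a_n\rangle=a_n\langle a_1,\ldots,a_{n-1}\rangle+\langle a_1,\ldots,a_{n-2}\rangle$; lists inside $\langle\cdot\rangle$ denote concatenation. $[x_1,\ldots,x_k]$ denotes the finite continued fraction $\cfrac{1}{x_1+\cfrac{1}{\ddots+\cfrac1{x_k}}}$. Define $c^{(1)}_{a,a+1;b}=[b,a+1,b]$, $c^{(2)}_{a,a+1;b}=[b+1,a]$, $c^{(1)}_{a;b,b+1}=[a,b+1,a]$, $c^{(2)}_{a;b,b+1}=[a+1,b]$. *)

theory Defs
  imports Complex_Main
begin

text \<open>Continuant: K [] = 1, K [a1] = a1, K (xs @ [a, b]) = b * K (xs @ [a]) + K xs.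
  Defined via the equivalent front recursion on the reversed list.\<close>
fun contR :: "real list \<Rightarrow> real" where
  "contR [] = 1"
| "contR [x] = x"
| "contR (x # y # xs) = x * contR (y # xs) + contR xs"

definition cont :: "real list \<Rightarrow> real" where
  "cont xs = contR (rev xs)"

fun cf :: "real list \<Rightarrow> real" where
  "cf [] = 0"
| "cf (x # xs) = 1 / (x + cf xs)"

definition c1_odd :: "nat \<Rightarrow> nat \<Rightarrow> real" where
  "c1_odd a b = cf [real b, real a + 1, real b]"
definition c2_odd :: "nat \<Rightarrow> nat \<Rightarrow> real" where
  "c2_odd a b = cf [real b + 1, real a]"
definition c1_even :: "nat \<Rightarrow> nat \<Rightarrow> real" where
  "c1_even a b = cf [real a, real b + 1, real a]"
definition c2_even :: "nat \<Rightarrow> nat \<Rightarrow> real" where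
  "c2_even a b = cf [real a + 1, real b]"

text \<open>Admissible sequences: (0-based) index i corresponds to position i+1, so
  even list indices are odd positions.\<close>
definition admissible :: "nat \<Rightarrow> nat \<Rightarrow> nat list \<Rightarrow> bool" where
  "admissible a b A \<longleftrightarrow> (\<forall>i < length A.
      (even i \<longrightarrow> A ! i \<in> {a, a + 1}) \<and> (odd i \<longrightarrow> A ! i \<in> {b, b + 1}))"

end

theory Submission
  imports Defs
begin

lemma contR_snoc2: "contR (xs @ [y, z]) = z * contR (xs @ [y]) + contR xs"
  by (induction xs rule: contR.induct) (auto simp: algebra_simps)

lemma contR_rev: "contR (rev xs) = contR xs"
proof (induction xs rule: contR.induct)
  case (3 x y xs)
  have "contR (rev (x # y # xs)) = contR (rev xs @ [y, x])" by simp
  also have "\<dots> = x * contR (rev xs @ [y]) + contR (rev xs)" by (rule contR_snoc2)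
  also have "\<dots> = contR (x # y # xs)" using 3 by simp
  finally show ?case .
qed auto

lemma cont_eq: "cont xs = contR xs"
  unfolding cont_def using contR_rev[of "rev xs"] by simp

lemma contR_pos: "\<forall>x\<in>set xs. x > 0 \<Longrightarrow> contR xs > 0"
  by (induction xs rule: contR.induct) (auto intro!: add_pos_pos mult_pos_pos)

lemma cf_nonneg: "\<forall>x\<in>set xs. x > 0 \<Longrightarrow> cf xs \<ge> 0"
  by (induction xs) auto

lemma cf_le: "\<forall>x\<in>set (y#xs). x > 0 \<Longrightarrow> cf (y # xs) \<le> 1 / y"
proof -
  assume h: "\<forall>x\<in>set (y#xs). x > 0"
  hence "cf xs \<ge> 0" "y > 0" using cf_nonneg by auto
  thus ?thesis by (simp add: frac_le)
qed

lemma cf_ratio: "xs \<noteq> [] \<Longrightarrow> \<forall>x\<in>set xs. x > 0 \<Longrightarrow> contR (tl xs) / contR xs = cf xs"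
proof (induction xs rule: contR.induct)
  case (3 x y xs)
  have p1: "contR (y # xs) > 0" using 3 by (intro contR_pos) auto
  have p2: "contR xs > 0" using 3 by (intro contR_pos) auto
  have ih: "contR xs / contR (y # xs) = cf (y # xs)" using 3 by auto
  have "contR (y # xs) / contR (x # y # xs) = 1 / (x + contR xs / contR (y # xs))"
    using p1 p2 by (simp add: field_simps)
  thus ?case using ih by simp
qed auto

definition pre :: "real list \<Rightarrow> real" where
  "pre S = (if S = [] then 0 else contR (butlast S))"

lemma pre_rec: "pre (s1 # s2 # S) = s1 * pre (s2 # S) + pre S"
  by (cases "S = []") (auto simp: pre_def)

lemma contR_split:
  assumes "T \<noteq> []"
  shows "contR (S @ z # T) = contR S * (z * contR T + contR (tl T)) + pre S * contR T"
proof (induction S rule: contR.induct)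
  case 1
  then show ?case using assms by (cases T) (auto simp: pre_def)
next
  case (2 x)
  then show ?case using assms by (cases T) (auto simp: pre_def algebra_simps)
next
  case (3 x y xs)
  have "contR ((x # y # xs) @ z # T) = x * contR ((y # xs) @ z # T) + contR (xs @ z # T)" by simp
  also have "\<dots> = contR (x # y # xs) * (z * contR T + contR (tl T)) + pre (x # y # xs) * contR T"
    using 3 by (simp add: pre_rec algebra_simps)
  finally show ?case .
qed

lemma ratio:
  assumes "P \<noteq> []" "R \<noteq> []" "\<forall>x\<in>set P. x > 0" "\<forall>x\<in>set R. x > 0" "z > 0"
  shows "contR (P @ (z + 1) # R) / contR (P @ z # R) = 1 + 1 / (z + cf (rev P) + cf R)"
proof -
  have cP: "contR P > 0" and cR: "contR R > 0" using assms contR_pos by auto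
  have u: "pre P / contR P = cf (rev P)"
  proof -
    have "pre P = contR (tl (rev P))" using assms(1)
      using butlast_rev[of "rev P"] by (simp add: pre_def contR_rev)
    moreover have "contR P = contR (rev P)" by (simp add: contR_rev)
    ultimately show ?thesis using cf_ratio[of "rev P"] assms by simp
  qed
  have v: "contR (tl R) / contR R = cf R" using cf_ratio assms by auto
  have u0: "cf (rev P) \<ge> 0" and v0: "cf R \<ge> 0" using cf_nonneg assms by auto
  define U where "U = cf (rev P)"
  define V where "V = cf R"
  have pe: "pre P = U * contR P" using u cP unfolding U_def by (simp add: field_simps)
  have te: "contR (tl R) = V * contR R" using v cR unfolding V_def by (simp add: field_simps)
  have "contR (P @ (z + 1) # R) / contR (P @ z # R)
     = (contR P * contR R * (z + 1 + V + U)) / (contR P * contR R * (z + V + U))"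
    using assms(2) by (simp add: contR_split pe te algebra_simps)
  also have "\<dots> = (z + 1 + V + U) / (z + V + U)" using cP cR by simp
  also have "\<dots> = 1 + 1 / (z + U + V)" using u0 v0 assms(5) unfolding U_def V_def
    by (simp add: field_simps)
  finally show ?thesis unfolding U_def V_def .
qed

lemma cf_bounds:
  fixes \<alpha> \<beta> :: real
  assumes "length L \<ge> 2" "\<forall>x\<in>set L. x > 0" "L!0 \<in> {\<beta>, \<beta>+1}" "L!1 \<in> {\<alpha>, \<alpha>+1}"
    "length L \<ge> 3 \<Longrightarrow> L!2 \<ge> \<beta>" "\<alpha> > 0" "\<beta> > 0"
  shows "cf [\<beta>+1, \<alpha>] \<le> cf L \<and> cf L \<le> cf [\<beta>, \<alpha>+1, \<beta>]"
proof -
  obtain y1 y2 L' where L: "L = y1 # y2 # L'" using assms(1)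
    by (metis One_nat_def Suc_1 Suc_le_length_iff)
  have y1: "\<beta> \<le> y1" "y1 \<le> \<beta> + 1" and y2: "\<alpha> \<le> y2" "y2 \<le> \<alpha> + 1"
    using assms(3,4) L by auto
  define t where "t = cf L'"
  have t0: "0 \<le> t" unfolding t_def using assms(2) L cf_nonneg by auto
  have t1: "t \<le> 1 / \<beta>"
  proof (cases L')
    case Nil then show ?thesis using assms t_def by simp
  next
    case (Cons w W)
    have "w \<ge> \<beta>" using assms(5) L Cons by simp
    hence "1 / w \<le> 1 / \<beta>" using assms(7) by (simp add: frac_le)
    moreover have "cf L' \<le> 1 / w" using Cons cf_le assms(2) L by auto
    ultimately show ?thesis unfolding t_def by simp
  qed
  have cfL: "cf L = 1 / (y1 + 1 / (y2 + t))" using L t_def by simp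
  have lo: "y1 + 1 / (y2 + t) \<le> \<beta> + 1 + 1 / \<alpha>"
  proof -
    have "1 / (y2 + t) \<le> 1 / \<alpha>" using y2 t0 assms(6) by (intro divide_left_mono) auto
    thus ?thesis using y1 by simp
  qed
  have hi: "\<beta> + 1 / (\<alpha> + 1 + 1 / \<beta>) \<le> y1 + 1 / (y2 + t)"
  proof -
    have "1 / (\<alpha> + 1 + 1 / \<beta>) \<le> 1 / (y2 + t)" using y2 t0 t1 assms(6,7)
      by (intro divide_left_mono) (auto intro!: mult_pos_pos add_pos_nonneg)
    thus ?thesis using y1 by simp
  qed
  have pos1: "0 < y1 + 1 / (y2 + t)" using y1 y2 t0 assms(6,7) by (smt (verit) divide_pos_pos)
  have pos2: "0 < \<beta> + 1 / (\<alpha> + 1 + 1 / \<beta>)" using assms(6,7) by (smt (verit) divide_pos_pos)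
  have "1 / (\<beta> + 1 + 1 / \<alpha>) \<le> 1 / (y1 + 1 / (y2 + t))"
    using lo pos1 by (intro divide_left_mono) auto
  moreover have "1 / (y1 + 1 / (y2 + t)) \<le> 1 / (\<beta> + 1 / (\<alpha> + 1 + 1 / \<beta>))"
    using hi pos2 by (intro divide_left_mono) auto
  ultimately show ?thesis using cfL by (simp add: add.assoc)
qed

lemma final_ineq:
  fixes z u v c1 c2 :: real
  assumes "z > 0" "c2 > 0" "c2 \<le> u" "u \<le> c1" "c2 \<le> v" "v \<le> c1"
  shows "1 + 1 / (z + 2 * c1) \<le> 1 + 1 / (z + u + v) \<and> 1 + 1 / (z + u + v) \<le> 1 + 1 / (z + 2 * c2)"
proof -
  have "1 / (z + 2 * c1) \<le> 1 / (z + u + v)" using assms by (intro divide_left_mono) auto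
  moreover have "1 / (z + u + v) \<le> 1 / (z + 2 * c2)" using assms by (intro divide_left_mono) auto
  ultimately show ?thesis by simp
qed



lemma par_p1: "(j::nat) mod 2 \<noteq> (j + 1) mod 2" by (simp add: mod_Suc)
lemma par_p2: "(j::nat) mod 2 = (j + 2) mod 2" by simp
lemma par_p3: "(j::nat) mod 2 \<noteq> (j + 3) mod 2" by (simp add: mod_Suc numeral_3_eq_3)
lemma par_q1: "(k::nat) \<ge> 2 \<Longrightarrow> (k-1) mod 2 \<noteq> k mod 2" using par_p1[of "k-1"] by simp
lemma par_q2: "(k::nat) \<ge> 2 \<Longrightarrow> (k-2) mod 2 = k mod 2" by (metis par_p2 le_add_diff_inverse2)
lemma par_q3: "(k::nat) \<ge> 3 \<Longrightarrow> (k-3) mod 2 \<noteq> k mod 2" by (metis par_p3 le_add_diff_inverse2)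
lemma par_r1: "(k+1+0) mod 2 \<noteq> (k::nat) mod 2" using par_p1[of k] by simp
lemma par_r2: "(k+1+1) mod 2 = (k::nat) mod 2" using par_p2[of k] by simp
lemma par_r3: "(k+1+2) mod 2 \<noteq> (k::nat) mod 2" by (metis par_p1 par_p2 add.assoc)

lemma side:
  fixes \<alpha> \<beta> :: nat and A P R :: "nat list"
  assumes "0 < \<alpha>" "0 < \<beta>" "\<forall>x\<in>set A. 0 < x" "A = P @ [\<alpha>] @ R"
    "length P \<ge> 2" "length R \<ge> 2"
    "\<forall>i<length A. (i mod 2 \<noteq> length P mod 2 \<longrightarrow> A!i \<in> {\<beta>, \<beta>+1})
        \<and> (i mod 2 = length P mod 2 \<longrightarrow> A!i \<in> {\<alpha>, \<alpha>+1})"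
  shows "1 + 1 / (real \<alpha> + 2 * cf [real \<beta>, real \<alpha> + 1, real \<beta>])
      \<le> cont (map real P @ [real \<alpha> + 1] @ map real R) / cont (map real P @ [real \<alpha>] @ map real R)
    \<and> cont (map real P @ [real \<alpha> + 1] @ map real R) / cont (map real P @ [real \<alpha>] @ map real R)
      \<le> 1 + 1 / (real \<alpha> + 2 * cf [real \<beta> + 1, real \<alpha>])"
proof -
  define k where "k = length P"
  have lenA: "length A = k + 1 + length R" using assms(4) k_def by simp
  have hP: "\<And>j. j < k \<Longrightarrow> A!j = P!j" using assms(4) k_def by (simp add: nth_append)
  have hR: "\<And>j. j < length R \<Longrightarrow> A!(k+1+j) = R!j" using assms(4) k_def
    by (simp add: nth_append)
  have diff: "\<And>i. i < length A \<Longrightarrow> i mod 2 \<noteq> k mod 2 \<Longrightarrow> A!i \<in> {\<beta>, \<beta>+1}"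
    using assms(7) k_def by blast
  have same: "\<And>i. i < length A \<Longrightarrow> i mod 2 = k mod 2 \<Longrightarrow> A!i \<in> {\<alpha>, \<alpha>+1}"
    using assms(7) k_def by blast
  have k2: "k \<ge> 2" and r2: "length R \<ge> 2" using assms(5,6) k_def by auto
  have posP: "\<forall>x\<in>set (map real P). x > 0" and posR: "\<forall>x\<in>set (map real R). x > 0"
    using assms(3,4) by auto
  have posrP: "\<forall>x\<in>set (rev (map real P)). x > 0" using posP by simp
  have a0: "real \<alpha> > 0" "real \<beta> > 0" using assms(1,2) by auto
  have bP: "cf [real \<beta> + 1, real \<alpha>] \<le> cf (rev (map real P))
      \<and> cf (rev (map real P)) \<le> cf [real \<beta>, real \<alpha> + 1, real \<beta>]"
  proof (rule cf_bounds)
    show "length (rev (map real P)) \<ge> 2" using assms(5) by simp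
    show "\<forall>x\<in>set (rev (map real P)). x > 0" by (rule posrP)
    have "rev (map real P) ! 0 = real (P!(k-1))" using assms(5) k_def by (subst rev_nth) auto
    moreover have "P!(k-1) \<in> {\<beta>, \<beta>+1}"
      proof -
      have par: "(k-1) mod 2 \<noteq> k mod 2" by (rule par_q1[OF k2])
      have il: "k-1 < length A" using k2 lenA by linarith
      have "A!(k-1) \<in> {\<beta>, \<beta>+1}" using diff[OF il par] .
      moreover have "A!(k-1) = P!(k-1)" using k2 hP by simp
      ultimately show ?thesis by simp
    qed
    ultimately show "rev (map real P) ! 0 \<in> {real \<beta>, real \<beta> + 1}" by auto
    have "rev (map real P) ! 1 = real (P!(k-2))" using assms(5) k_def
      by (subst rev_nth) (auto simp: numeral_2_eq_2)
    moreover have "P!(k-2) \<in> {\<alpha>, \<alpha>+1}"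
      proof -
      have par: "(k-2) mod 2 = k mod 2" by (rule par_q2[OF k2])
      have il: "k-2 < length A" using k2 lenA by linarith
      have "A!(k-2) \<in> {\<alpha>, \<alpha>+1}" using same[OF il par] .
      moreover have "A!(k-2) = P!(k-2)" using k2 hP by simp
      ultimately show ?thesis by simp
    qed
    ultimately show "rev (map real P) ! 1 \<in> {real \<alpha>, real \<alpha> + 1}" by auto
    assume l3: "length (rev (map real P)) \<ge> 3"
    have k3: "k \<ge> 3" using l3 k_def by simp
    have "rev (map real P) ! 2 = real (P!(k-3))" using l3 k_def
      by (subst rev_nth) (auto simp: numeral_3_eq_3 numeral_2_eq_2)
    moreover have "P!(k-3) \<in> {\<beta>, \<beta>+1}"
      proof -
      have par: "(k-3) mod 2 \<noteq> k mod 2" by (rule par_q3[OF k3])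
      have il: "k-3 < length A" using k3 lenA by linarith
      have "A!(k-3) \<in> {\<beta>, \<beta>+1}" using diff[OF il par] .
      moreover have "A!(k-3) = P!(k-3)" using k3 hP by simp
      ultimately show ?thesis by simp
    qed
    ultimately show "rev (map real P) ! 2 \<ge> real \<beta>" by auto
  qed (use a0 in auto)
  have bR: "cf [real \<beta> + 1, real \<alpha>] \<le> cf (map real R)
      \<and> cf (map real R) \<le> cf [real \<beta>, real \<alpha> + 1, real \<beta>]"
  proof (rule cf_bounds)
    show "length (map real R) \<ge> 2" using assms(6) by simp
    show "\<forall>x\<in>set (map real R). x > 0" by (rule posR)
    have "R!0 \<in> {\<beta>, \<beta>+1}"
      proof -
      have par: "(k+1+0) mod 2 \<noteq> k mod 2" by (rule par_r1)
      have il: "k+1+0 < length A" using r2 lenA by linarith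
      have "A!(k+1+0) \<in> {\<beta>, \<beta>+1}" using diff[OF il par] .
      moreover have "A!(k+1+0) = R!0" using r2 hR[of 0] by force
      ultimately show ?thesis by simp
    qed
    then show "map real R ! 0 \<in> {real \<beta>, real \<beta> + 1}" using nth_map[of 0 R real] r2 by (simp add: not_le[symmetric]; linarith)
    have "R!1 \<in> {\<alpha>, \<alpha>+1}"
      proof -
      have par: "(k+1+1) mod 2 = k mod 2" by (rule par_r2)
      have il: "k+1+1 < length A" using r2 lenA by linarith
      have "A!(k+1+1) \<in> {\<alpha>, \<alpha>+1}" using same[OF il par] .
      moreover have "A!(k+1+1) = R!1" using r2 hR[of 1] by force
      ultimately show ?thesis by simp
    qed
    then show "map real R ! 1 \<in> {real \<alpha>, real \<alpha> + 1}" using nth_map[of 1 R real] r2 by (simp add: not_le[symmetric]; linarith)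
    assume l3: "length (map real R) \<ge> 3"
    have r3: "length R \<ge> 3" using l3 by simp
    have "R!2 \<in> {\<beta>, \<beta>+1}"
      proof -
      have par: "(k+1+2) mod 2 \<noteq> k mod 2" by (rule par_r3)
      have il: "k+1+2 < length A" using r3 lenA by linarith
      have "A!(k+1+2) \<in> {\<beta>, \<beta>+1}" using diff[OF il par] .
      moreover have "A!(k+1+2) = R!2" using r3 hR[of 2] by force
      ultimately show ?thesis by simp
    qed
    then show "map real R ! 2 \<ge> real \<beta>" using nth_map[of 2 R real] r3 by (simp add: not_le[symmetric]; linarith)
  qed (use a0 in auto)
  have c2pos: "cf [real \<beta> + 1, real \<alpha>] > 0" using a0 by (simp add: add_pos_pos)
  have r: "cont (map real P @ [real \<alpha> + 1] @ map real R) / cont (map real P @ [real \<alpha>] @ map real R)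
     = 1 + 1 / (real \<alpha> + cf (rev (map real P)) + cf (map real R))"
  proof -
    have "contR (map real P @ (real \<alpha> + 1) # map real R) / contR (map real P @ real \<alpha> # map real R)
      = 1 + 1 / (real \<alpha> + cf (rev (map real P)) + cf (map real R))"
      by (rule ratio) (use assms(5,6) posP posR a0 in auto)
    thus ?thesis unfolding cont_eq by simp
  qed
  show ?thesis unfolding r
    using final_ineq[OF a0(1) c2pos conjunct1[OF bP] conjunct2[OF bP] conjunct1[OF bR] conjunct2[OF bR]] .
qed

theorem lemma11:
  fixes a b :: nat and A :: "nat list"
  assumes "0 < a" and "0 < b" and "\<forall>x \<in> set A. 0 < x"
    and "admissible a b A"
  shows "(\<forall>P R. A = P @ [a] @ R \<longrightarrow> even (length P) \<longrightarrow> length P \<ge> 2 \<longrightarrow> length R \<ge> 2 \<longrightarrow>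
            1 + 1 / (real a + 2 * c1_odd a b)
              \<le> cont (map real P @ [real a + 1] @ map real R) / cont (map real P @ [real a] @ map real R)
          \<and> cont (map real P @ [real a + 1] @ map real R) / cont (map real P @ [real a] @ map real R)
              \<le> 1 + 1 / (real a + 2 * c2_odd a b))
       \<and> (\<forall>P R. A = P @ [b] @ R \<longrightarrow> odd (length P) \<longrightarrow> length P \<ge> 2 \<longrightarrow> length R \<ge> 2 \<longrightarrow>
            1 + 1 / (real b + 2 * c1_even a b)
              \<le> cont (map real P @ [real b + 1] @ map real R) / cont (map real P @ [real b] @ map real R)
          \<and> cont (map real P @ [real b + 1] @ map real R) / cont (map real P @ [real b] @ map real R)
              \<le> 1 + 1 / (real b + 2 * c2_even a b))"
proof (intro conjI allI impI)
  fix P R assume h: "A = P @ [a] @ R" "even (length P)" "length P \<ge> 2" "length R \<ge> 2"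
  have adm: "\<forall>i<length A. (i mod 2 \<noteq> length P mod 2 \<longrightarrow> A!i \<in> {b, b+1})
        \<and> (i mod 2 = length P mod 2 \<longrightarrow> A!i \<in> {a, a+1})"
  proof (intro allI impI conjI)
    fix i assume i: "i < length A"
    have e: "(even i \<longrightarrow> A ! i \<in> {a, a + 1}) \<and> (odd i \<longrightarrow> A ! i \<in> {b, b + 1})"
      using assms(4) i unfolding admissible_def by blast
    { assume "i mod 2 \<noteq> length P mod 2"
      hence "odd i" using h(2) by (simp add: even_iff_mod_2_eq_zero odd_iff_mod_2_eq_one)
      thus "A!i \<in> {b, b+1}" using e by blast }
    { assume "i mod 2 = length P mod 2"
      hence "even i" using h(2) by (simp add: even_iff_mod_2_eq_zero odd_iff_mod_2_eq_one)
      thus "A!i \<in> {a, a+1}" using e by blast }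
  qed
  from side[OF assms(1,2,3) h(1,3,4) adm]
  show "1 + 1 / (real a + 2 * c1_odd a b)
              \<le> cont (map real P @ [real a + 1] @ map real R) / cont (map real P @ [real a] @ map real R)"
    "cont (map real P @ [real a + 1] @ map real R) / cont (map real P @ [real a] @ map real R)
              \<le> 1 + 1 / (real a + 2 * c2_odd a b)"
    unfolding c1_odd_def c2_odd_def by auto
next
  fix P R assume h: "A = P @ [b] @ R" "odd (length P)" "length P \<ge> 2" "length R \<ge> 2"
  have adm: "\<forall>i<length A. (i mod 2 \<noteq> length P mod 2 \<longrightarrow> A!i \<in> {a, a+1})
        \<and> (i mod 2 = length P mod 2 \<longrightarrow> A!i \<in> {b, b+1})"
  proof (intro allI impI conjI)
    fix i assume i: "i < length A"
    have e: "(even i \<longrightarrow> A ! i \<in> {a, a + 1}) \<and> (odd i \<longrightarrow> A ! i \<in> {b, b + 1})"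
      using assms(4) i unfolding admissible_def by blast
    { assume "i mod 2 \<noteq> length P mod 2"
      hence "even i" using h(2) by (simp add: even_iff_mod_2_eq_zero odd_iff_mod_2_eq_one)
      thus "A!i \<in> {a, a+1}" using e by blast }
    { assume "i mod 2 = length P mod 2"
      hence "odd i" using h(2) by (simp add: even_iff_mod_2_eq_zero odd_iff_mod_2_eq_one)
      thus "A!i \<in> {b, b+1}" using e by blast }
  qed
  from side[OF assms(2,1,3) h(1,3,4) adm]
  show "1 + 1 / (real b + 2 * c1_even a b)
              \<le> cont (map real P @ [real b + 1] @ map real R) / cont (map real P @ [real b] @ map real R)"
    "cont (map real P @ [real b + 1] @ map real R) / cont (map real P @ [real b] @ map real R)
              \<le> 1 + 1 / (real b + 2 * c2_even a b)"
    unfolding c1_even_def c2_even_def by auto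
qed

end
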